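(* Let $X$ be a complex torus of dimension $g$ with period matrix $(\tau\ \ I_g)$, $\tau=(\tau_{ij})\in M_g(\mathbb{C})$, $\det(\operatorname{Im}\tau)\ne0$, and let $\mathfrak{d}=[\mathbb{Q}(\{\tau_{ij}\}):\mathbb{Q}]$. If $\rho(X)<g$ (in particular if $\rho(X)=0$), then $\mathfrak{d}\ge5$.
   Context: A period matrix $(\tau\ \ I_g)$ means $X=\mathbb{C}^g/\Lambda$ with $\Lambda$ the lattice generated by the $2g$ columns. The Picard number $\rho(X)$ is the rank of the Néron–Severi group $\mathrm{NS}(X)$. *)

theory Defs
  imports "HOL-Analysis.Analysis" "HOL-Library.Extended_Nat"
begin

definition is_subfield :: "complex set \<Rightarrow> bool" where
  "is_subfield F \<longleftrightarrow> 0 \<in> F \<and> 1 \<in> F \<and>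
     (\<forall>x\<in>F. \<forall>y\<in>F. x + y \<in> F \<and> x - y \<in> F \<and> x * y \<in> F) \<and>
     (\<forall>x\<in>F. x \<noteq> 0 \<longrightarrow> inverse x \<in> F)"

definition gen_field :: "complex set \<Rightarrow> complex set" where
  "gen_field S = \<Inter>{F. is_subfield F \<and> S \<subseteq> F}"

definition Q_indep :: "complex set \<Rightarrow> bool" where
  "Q_indep S \<longleftrightarrow> finite S \<and>
     (\<forall>c :: complex \<Rightarrow> rat. (\<Sum>x\<in>S. of_rat (c x) * x) = 0 \<longrightarrow> (\<forall>x\<in>S. c x = 0))"

definition field_degree :: "complex set \<Rightarrow> enat" where
  "field_degree F = Sup {enat (card S) | S. S \<subseteq> F \<and> Q_indep S}"

text \<open>The lattice Lambda spanned by the 2g columns of the period matrix (tau  I_g).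
  Columns are indexed by 'g + 'g: Inl j is column j of tau, Inr j is the j-th unit vector.\<close>
definition lattice_vec :: "complex^'g^'g \<Rightarrow> ('g + 'g) \<Rightarrow> complex^'g" where
  "lattice_vec \<tau> a = (case a of Inl j \<Rightarrow> (\<chi> i. \<tau>$i$j) | Inr j \<Rightarrow> (\<chi> i. if i = j then 1 else 0))"

definition real_bilinear :: "('v::real_vector \<Rightarrow> 'v \<Rightarrow> real) \<Rightarrow> bool" where
  "real_bilinear B \<longleftrightarrow> (\<forall>w. linear (\<lambda>v. B v w)) \<and> (\<forall>v. linear (\<lambda>w. B v w))"

text \<open>Neron--Severi group of X = C^g / Lambda: integer alternating forms E on Lambda
  (Gram matrix w.r.t. the lattice basis) whose real-bilinear extension to C^g satisfies
  E(iv, iw) = E(v, w) (Appell--Humbert / Lefschetz (1,1)).\<close>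
definition NS :: "complex^'g^'g \<Rightarrow> (('g + 'g) \<Rightarrow> ('g + 'g) \<Rightarrow> int) set" where
  "NS \<tau> = {E. (\<forall>a. E a a = 0) \<and> (\<forall>a b. E a b = - E b a) \<and>
     (\<exists>B :: complex^'g \<Rightarrow> complex^'g \<Rightarrow> real. real_bilinear B \<and>
        (\<forall>a b. B (lattice_vec \<tau> a) (lattice_vec \<tau> b) = of_int (E a b)) \<and>
        (\<forall>v w. B (\<chi> k. \<i> * v$k) (\<chi> k. \<i> * w$k) = B v w))}"

definition Z_indep :: "('a \<Rightarrow> 'a \<Rightarrow> int) set \<Rightarrow> bool" where
  "Z_indep S \<longleftrightarrow> finite S \<and>
     (\<forall>c :: ('a \<Rightarrow> 'a \<Rightarrow> int) \<Rightarrow> int. (\<forall>a b. (\<Sum>E\<in>S. c E * E a b) = 0) \<longrightarrow> (\<forall>E\<in>S. c E = 0))"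

definition picard_number :: "complex^'g^'g \<Rightarrow> enat" where
  "picard_number \<tau> = Sup {enat (card S) | S. S \<subseteq> NS \<tau> \<and> Z_indep S}"

end

theory Submission
  imports Defs
begin


lemma gen_field_sub: "S \<subseteq> gen_field S"
  unfolding gen_field_def by auto

lemma subfield_gen: "is_subfield (gen_field S)"
  unfolding is_subfield_def gen_field_def by auto

lemma degree_span:
  assumes "\<not> (field_degree F \<ge> 5)"
  obtains Sb where "finite Sb" "card Sb \<le> 4" "Sb \<subseteq> F"
    "\<forall>z\<in>F. \<exists>c. z = (\<Sum>x\<in>Sb. of_rat (c x) * x)"
proof -
  have bnd: "card S \<le> 4" if "S \<subseteq> F" "Q_indep S" for S
  proof -
    have "enat (card S) \<le> field_degree F"
      unfolding field_degree_def using that by (intro Sup_upper) auto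
    also have "\<dots> < 5" using assms by (simp add: not_le)
    finally show ?thesis by (simp add: numeral_eq_enat)
  qed
  define N where "N = {card S | S. S \<subseteq> F \<and> Q_indep S}"
  have "N \<subseteq> {..4}" unfolding N_def using bnd by blast
  hence fN: "finite N" using finite_subset by blast
  have "0 \<in> N" unfolding N_def Q_indep_def by (intro CollectI exI[of _ "{}"]) auto
  hence "Max N \<in> N" using fN by (intro Max_in) auto
  then obtain Sb where Sb: "Sb \<subseteq> F" "Q_indep Sb" "card Sb = Max N" unfolding N_def by auto
  have fin: "finite Sb" using Sb(2) unfolding Q_indep_def by auto
  have span: "\<exists>c. z = (\<Sum>x\<in>Sb. of_rat (c x) * x)" if z: "z \<in> F" for z
  proof (cases "z \<in> Sb")
    case True
    have "(\<Sum>x\<in>Sb. of_rat (if x = z then 1 else 0) * x) = (\<Sum>x\<in>Sb. if x = z then z else 0)"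
      by (rule sum.cong) auto
    also have "\<dots> = z" using fin True by simp
    finally show ?thesis by metis
  next
    case False
    have "card (insert z Sb) \<in> N \<Longrightarrow> False"
    proof -
      assume "card (insert z Sb) \<in> N"
      hence "card (insert z Sb) \<le> Max N" using fN by auto
      thus False using Sb(3) fin False by simp
    qed
    hence "\<not> Q_indep (insert z Sb)" unfolding N_def using Sb(1) z by auto
    then obtain c where c: "(\<Sum>x\<in>insert z Sb. of_rat (c x) * x) = 0" "\<exists>x\<in>insert z Sb. c x \<noteq> 0"
      unfolding Q_indep_def using fin by auto
    have c2: "of_rat (c z) * z + (\<Sum>x\<in>Sb. of_rat (c x) * x) = 0"
      using c(1) fin False by simp
    have cz: "c z \<noteq> 0"
    proof
      assume "c z = 0"
      hence "(\<Sum>x\<in>Sb. of_rat (c x) * x) = 0" using c2 by simp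
      hence "\<forall>x\<in>Sb. c x = 0" using Sb(2) unfolding Q_indep_def by blast
      thus False using c(2) \<open>c z = 0\<close> by auto
    qed
    show ?thesis
    proof (rule exI[of _ "\<lambda>x. - c x / c z"])
      have "z = - (\<Sum>x\<in>Sb. of_rat (c x) * x) / of_rat (c z)"
        using c2 cz by (simp add: field_simps eq_neg_iff_add_eq_0)
      also have "\<dots> = (\<Sum>x\<in>Sb. of_rat (- c x / c z) * x)"
        by (simp add: sum_divide_distrib sum_negf of_rat_divide of_rat_minus field_simps flip: sum_negf)
      finally show "z = (\<Sum>x\<in>Sb. of_rat (- c x / c z) * x)" .
    qed
  qed
  have "card Sb \<le> 4" using bnd[OF Sb(1,2)] .
  thus ?thesis using that fin Sb span by blast
qed


definition wv :: "complex^'g^'g \<Rightarrow> 'g \<Rightarrow> ('g+'g) \<Rightarrow> complex" where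
 "wv \<tau> k a = (case a of Inl k' \<Rightarrow> if k' = k then 1 else 0 | Inr k' \<Rightarrow> - \<tau>$k'$k)"

definition EC :: "(('g::finite+'g) \<Rightarrow> ('g+'g) \<Rightarrow> int) \<Rightarrow> (('g+'g) \<Rightarrow> complex) \<Rightarrow> (('g+'g) \<Rightarrow> complex) \<Rightarrow> complex" where
 "EC E p q = (\<Sum>a\<in>UNIV. \<Sum>b\<in>UNIV. p a * of_int (E a b) * q b)"

lemma EC_bilin:
  "EC E (\<lambda>a. \<Sum>k\<in>UNIV. x k * f k a) (\<lambda>b. \<Sum>l\<in>UNIV. y l * g l b)
   = (\<Sum>k\<in>UNIV. \<Sum>l\<in>UNIV. x k * y l * EC E (f k) (g l))"
proof -
  have "EC E (\<lambda>a. \<Sum>k\<in>UNIV. x k * f k a) (\<lambda>b. \<Sum>l\<in>UNIV. y l * g l b)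
     = (\<Sum>a\<in>UNIV. \<Sum>b\<in>UNIV. \<Sum>k\<in>UNIV. \<Sum>l\<in>UNIV. x k * y l * (f k a * of_int (E a b) * g l b))"
    unfolding EC_def
  proof (intro sum.cong refl)
    fix a b
    show "(\<Sum>k\<in>UNIV. x k * f k a) * of_int (E a b) * (\<Sum>l\<in>UNIV. y l * g l b) =
         (\<Sum>k\<in>UNIV. \<Sum>l\<in>UNIV. x k * y l * (f k a * of_int (E a b) * g l b))"
      unfolding mult.assoc sum_distrib_left[of "of_int (E a b)"] sum_product by (intro sum.cong refl) (simp add: algebra_simps)
  qed
  also have "\<dots> = (\<Sum>a\<in>UNIV. \<Sum>k\<in>UNIV. \<Sum>l\<in>UNIV. \<Sum>b\<in>UNIV. x k * y l * (f k a * of_int (E a b) * g l b))"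
  proof (intro sum.cong refl)
    fix a
    have "(\<Sum>b\<in>UNIV. \<Sum>k\<in>UNIV. \<Sum>l\<in>UNIV. x k * y l * (f k a * of_int (E a b) * g l b))
       = (\<Sum>k\<in>UNIV. \<Sum>b\<in>UNIV. \<Sum>l\<in>UNIV. x k * y l * (f k a * of_int (E a b) * g l b))"
      by (rule sum.swap)
    also have "\<dots> = (\<Sum>k\<in>UNIV. \<Sum>l\<in>UNIV. \<Sum>b\<in>UNIV. x k * y l * (f k a * of_int (E a b) * g l b))"
      by (intro sum.cong refl sum.swap)
    finally show "(\<Sum>b\<in>UNIV. \<Sum>k\<in>UNIV. \<Sum>l\<in>UNIV. x k * y l * (f k a * of_int (E a b) * g l b))
       = (\<Sum>k\<in>UNIV. \<Sum>l\<in>UNIV. \<Sum>b\<in>UNIV. x k * y l * (f k a * of_int (E a b) * g l b))" .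
  qed
  also have "\<dots> = (\<Sum>k\<in>UNIV. \<Sum>a\<in>UNIV. \<Sum>l\<in>UNIV. \<Sum>b\<in>UNIV. x k * y l * (f k a * of_int (E a b) * g l b))"
    by (rule sum.swap)
  also have "\<dots> = (\<Sum>k\<in>UNIV. \<Sum>l\<in>UNIV. \<Sum>a\<in>UNIV. \<Sum>b\<in>UNIV. x k * y l * (f k a * of_int (E a b) * g l b))"
    by (intro sum.cong refl sum.swap)
  also have "\<dots> = (\<Sum>k\<in>UNIV. \<Sum>l\<in>UNIV. x k * y l * EC E (f k) (g l))"
    unfolding EC_def by (simp add: sum_distrib_left)
  finally show ?thesis .
qed

lemma EC_add1: "EC E (\<lambda>a. p a + p' a) q = EC E p q + EC E p' q"
  unfolding EC_def by (simp add: distrib_right sum.distrib)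
lemma EC_add2: "EC E p (\<lambda>a. q a + q' a) = EC E p q + EC E p q'"
  unfolding EC_def by (simp add: distrib_left sum.distrib)
lemma EC_scale1: "EC E (\<lambda>a. c * p a) q = c * EC E p q"
  unfolding EC_def by (simp add: sum_distrib_left mult.assoc)
lemma EC_scale2: "EC E p (\<lambda>a. c * q a) = c * EC E p q"
  unfolding EC_def by (simp add: sum_distrib_left mult.assoc mult.left_commute)
lemma EC_cnj: "EC E (\<lambda>a. cnj (p a)) (\<lambda>b. cnj (q b)) = cnj (EC E p q)"
  unfolding EC_def by (simp add: cnj_sum)
lemma EC_delta: "EC E (\<lambda>a. if a = c then 1 else 0) (\<lambda>b. if b = d then 1 else 0) = of_int (E c d)"
proof -
  have "EC E (\<lambda>a. if a = c then 1 else 0) (\<lambda>b. if b = d then 1 else 0) =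
     (\<Sum>a\<in>UNIV. if a = c then (\<Sum>b\<in>UNIV. of_int (E a b) * (if b = d then 1 else 0)) else 0)"
    unfolding EC_def by (intro sum.cong refl) auto
  also have "\<dots> = (\<Sum>b\<in>UNIV. of_int (E c b) * (if b = d then 1 else 0))" by simp
  also have "\<dots> = (\<Sum>b\<in>UNIV. if b = d then of_int (E c b) else 0)" by (rule sum.cong) auto
  finally show ?thesis by simp
qed

definition sv :: "real^'g^'g \<Rightarrow> complex^'g \<Rightarrow> 'g \<Rightarrow> complex" where
 "sv Yi v k = (\<i>/2) * (\<Sum>l\<in>UNIV. of_real (Yi$k$l) * cnj (v$l))"
definition Mv :: "complex^'g^'g \<Rightarrow> real^'g^'g \<Rightarrow> complex^'g \<Rightarrow> ('g+'g) \<Rightarrow> complex" where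
 "Mv \<tau> Yi v a = (\<Sum>k\<in>UNIV. sv Yi v k * wv \<tau> k a)"
definition BB :: "complex^'g^'g \<Rightarrow> real^'g^'g \<Rightarrow> (('g+'g) \<Rightarrow> ('g+'g) \<Rightarrow> int) \<Rightarrow> complex^'g \<Rightarrow> complex^'g \<Rightarrow> real" where
 "BB \<tau> Yi E v w = 2 * Re (EC E (Mv \<tau> Yi v) (\<lambda>a. cnj (Mv \<tau> Yi w a)))"

lemma sv_add: "sv Yi (v + v') k = sv Yi v k + sv Yi v' k"
  by (simp add: sv_def sum.distrib distrib_left)
lemma sv_scale: "sv Yi (r *\<^sub>R v) k = of_real r * sv Yi v k"
  unfolding sv_def vector_scaleR_component by (simp add: sum_distrib_left scaleR_conv_of_real mult_ac)
lemma sv_i: "sv Yi (\<chi> k. \<i> * v$k) k = - \<i> * sv Yi v k"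
  by (simp add: sv_def sum_distrib_left mult_ac)
lemma Mv_add: "Mv \<tau> Yi (v + v') a = Mv \<tau> Yi v a + Mv \<tau> Yi v' a"
  by (simp add: Mv_def sv_add sum.distrib distrib_right)
lemma Mv_scale: "Mv \<tau> Yi (r *\<^sub>R v) a = of_real r * Mv \<tau> Yi v a"
  by (simp add: Mv_def sv_scale sum_distrib_left mult_ac)
lemma Mv_i: "Mv \<tau> Yi (\<chi> k. \<i> * v$k) a = - \<i> * Mv \<tau> Yi v a"
  by (simp add: Mv_def sv_i sum_distrib_left mult_ac)

lemma BB_bilinear: "real_bilinear (BB \<tau> Yi E)"
  unfolding real_bilinear_def
proof (intro conjI allI)
  fix w
  show "linear (\<lambda>v. BB \<tau> Yi E v w)"
  proof (rule linearI)
    fix v v'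
    have "Mv \<tau> Yi (v + v') = (\<lambda>a. Mv \<tau> Yi v a + Mv \<tau> Yi v' a)" by (intro ext) (simp add: Mv_add)
    thus "BB \<tau> Yi E (v + v') w = BB \<tau> Yi E v w + BB \<tau> Yi E v' w"
      by (simp add: BB_def EC_add1)
  next
    fix r v
    have "Mv \<tau> Yi (r *\<^sub>R v) = (\<lambda>a. of_real r * Mv \<tau> Yi v a)" by (intro ext) (simp add: Mv_scale)
    thus "BB \<tau> Yi E (r *\<^sub>R v) w = r *\<^sub>R BB \<tau> Yi E v w"
      by (simp add: BB_def EC_scale1)
  qed
next
  fix v
  show "linear (\<lambda>w. BB \<tau> Yi E v w)"
  proof (rule linearI)
    fix w w'
    have "(\<lambda>a. cnj (Mv \<tau> Yi (w + w') a)) = (\<lambda>a. cnj (Mv \<tau> Yi w a) + cnj (Mv \<tau> Yi w' a))" by (intro ext) (simp add: Mv_add)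
    thus "BB \<tau> Yi E v (w + w') = BB \<tau> Yi E v w + BB \<tau> Yi E v w'"
      by (simp add: BB_def EC_add2)
  next
    fix r w
    have "(\<lambda>a. cnj (Mv \<tau> Yi (r *\<^sub>R w) a)) = (\<lambda>a. of_real r * cnj (Mv \<tau> Yi w a))" by (intro ext) (simp add: Mv_scale)
    thus "BB \<tau> Yi E v (r *\<^sub>R w) = r *\<^sub>R BB \<tau> Yi E v w"
      by (simp add: BB_def EC_scale2)
  qed
qed

lemma BB_i: "BB \<tau> Yi E (\<chi> k. \<i> * v$k) (\<chi> k. \<i> * w$k) = BB \<tau> Yi E v w"
proof -
  have 1: "Mv \<tau> Yi (\<chi> k. \<i> * v$k) = (\<lambda>a. - \<i> * Mv \<tau> Yi v a)" by (intro ext) (simp add: Mv_i)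
  have 2: "(\<lambda>a. cnj (Mv \<tau> Yi (\<chi> k. \<i> * w$k) a)) = (\<lambda>a. \<i> * cnj (Mv \<tau> Yi w a))" by (intro ext) (simp add: Mv_i)
  show ?thesis unfolding BB_def 1 2 EC_scale1 EC_scale2 by simp
qed

lemma Re_sv: "Re (sv Yi v k) = (\<Sum>l\<in>UNIV. Yi$k$l * Im (v$l)) / 2"
  by (simp add: sv_def sum_divide_distrib sum_negf)
lemma Im_sv: "Im (sv Yi v k) = (\<Sum>l\<in>UNIV. Yi$k$l * Re (v$l)) / 2"
  by (simp add: sv_def sum_divide_distrib)
lemma Mv_Inl: "Mv \<tau> Yi v (Inl k) = sv Yi v k"
proof -
  have "Mv \<tau> Yi v (Inl k) = (\<Sum>ka\<in>UNIV. sv Yi v ka * (if k = ka then 1 else 0))" by (simp add: Mv_def wv_def)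
  also have "\<dots> = (\<Sum>ka\<in>UNIV. if k = ka then sv Yi v ka else 0)" by (rule sum.cong) auto
  finally show ?thesis by simp
qed
lemma Re_Mv_Inr: "Re (Mv \<tau> Yi v (Inr k)) = - (\<Sum>k'\<in>UNIV. Re (sv Yi v k') * Re (\<tau>$k$k') - Im (sv Yi v k') * Im (\<tau>$k$k'))"
  by (simp add: Mv_def wv_def sum_negf)

lemma psi:
  assumes YiY: "\<And>k j. (\<Sum>l\<in>UNIV. Yi$k$l * Im (\<tau>$l$j)) = (if k = j then 1 else 0)"
    and YYi: "\<And>k j. (\<Sum>l\<in>UNIV. Im (\<tau>$k$l) * Yi$l$j) = (if k = j then 1 else 0)"
  shows "2 * Re (Mv \<tau> Yi (lattice_vec \<tau> c) a) = (if a = c then 1 else 0)"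
proof -
  have swap_inv: "(\<Sum>k'\<in>UNIV. Im (\<tau>$k$k') * (\<Sum>l\<in>UNIV. Yi$k'$l * R l)) = R k" for k R
  proof -
    have "(\<Sum>k'\<in>UNIV. Im (\<tau>$k$k') * (\<Sum>l\<in>UNIV. Yi$k'$l * R l))
        = (\<Sum>k'\<in>UNIV. \<Sum>l\<in>UNIV. Im (\<tau>$k$k') * Yi$k'$l * R l)"
      by (simp add: sum_distrib_left mult.assoc)
    also have "\<dots> = (\<Sum>l\<in>UNIV. \<Sum>k'\<in>UNIV. Im (\<tau>$k$k') * Yi$k'$l * R l)"
      by (rule sum.swap)
    also have "\<dots> = (\<Sum>l\<in>UNIV. (\<Sum>k'\<in>UNIV. Im (\<tau>$k$k') * Yi$k'$l) * R l)"
      by (simp add: sum_distrib_right)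
    also have "\<dots> = (\<Sum>l\<in>UNIV. if k = l then R l else 0)"
      unfolding YYi by (rule sum.cong) auto
    finally show ?thesis by simp
  qed
  show ?thesis
  proof (cases c)
    case (Inl j)
    have v: "lattice_vec \<tau> c $ l = \<tau>$l$j" for l by (simp add: lattice_vec_def Inl)
    have Rs: "Re (sv Yi (lattice_vec \<tau> c) k') = (if k' = j then 1 else 0) / 2" for k'
      unfolding Re_sv v YiY ..
    have Is: "Im (sv Yi (lattice_vec \<tau> c) k') = (\<Sum>l\<in>UNIV. Yi$k'$l * Re (\<tau>$l$j)) / 2" for k'
      unfolding Im_sv v ..
    show ?thesis
    proof (cases a)
      case (Inl k)
      show ?thesis using Rs[of k] by (simp add: Mv_Inl \<open>a = Inl k\<close> \<open>c = Inl j\<close>)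
    next
      case (Inr k)
      have "Re (Mv \<tau> Yi (lattice_vec \<tau> c) a) =
         - ((\<Sum>k'\<in>UNIV. (if k' = j then 1 else 0) / 2 * Re (\<tau>$k$k'))
           - (\<Sum>k'\<in>UNIV. Im (\<tau>$k$k') * (\<Sum>l\<in>UNIV. Yi$k'$l * Re (\<tau>$l$j))) / 2)"
        unfolding Inr Re_Mv_Inr Rs Is
        by (simp add: sum_subtractf sum_divide_distrib sum_distrib_left mult_ac)
      also have "(\<Sum>k'\<in>UNIV. (if k' = j then 1 else 0) / 2 * Re (\<tau>$k$k')) = (\<Sum>k'\<in>UNIV. if k' = j then Re (\<tau>$k$k') / 2 else 0)"
        by (rule sum.cong) auto
      also have "- ((\<Sum>k'\<in>UNIV. if k' = j then Re (\<tau>$k$k') / 2 else 0)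
           - (\<Sum>k'\<in>UNIV. Im (\<tau>$k$k') * (\<Sum>l\<in>UNIV. Yi$k'$l * Re (\<tau>$l$j))) / 2) = 0"
        unfolding swap_inv by simp
      finally show ?thesis using Inr \<open>c = Inl j\<close> by simp
    qed
  next
    case (Inr j)
    have v: "lattice_vec \<tau> c $ l = (if l = j then 1 else 0)" for l by (simp add: lattice_vec_def Inr)
    have Rs: "Re (sv Yi (lattice_vec \<tau> c) k') = 0" for k'
      unfolding Re_sv v by (simp add: if_distrib cong: if_cong)
    have Is: "Im (sv Yi (lattice_vec \<tau> c) k') = Yi$k'$j / 2" for k'
    proof -
      have "(\<Sum>l\<in>UNIV. Yi$k'$l * Re (lattice_vec \<tau> c $ l)) = (\<Sum>l\<in>UNIV. if l = j then Yi$k'$l else 0)"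
        unfolding v by (rule sum.cong) auto
      thus ?thesis unfolding Im_sv by simp
    qed
    show ?thesis
    proof (cases a)
      case (Inl k)
      show ?thesis using Rs[of k] by (simp add: Mv_Inl \<open>a = Inl k\<close> \<open>c = Inr j\<close>)
    next
      case (Inr k)
      have "Re (Mv \<tau> Yi (lattice_vec \<tau> c) a) = (\<Sum>k'\<in>UNIV. Im (\<tau>$k$k') * Yi$k'$j) / 2"
        unfolding Inr Re_Mv_Inr Rs Is
        by (simp add: sum_negf sum_divide_distrib mult_ac)
      thus ?thesis unfolding YYi using Inr \<open>c = Inr j\<close> by simp
    qed
  qed
qed

lemma NS_intro:
  fixes \<tau> :: "complex^'g^'g"
  assumes det: "det (\<chi> i j. Im (\<tau>$i$j)) \<noteq> 0"
    and alt1: "\<forall>a. E a a = 0" and alt2: "\<forall>a b. E a b = - E b a"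
    and cond: "\<And>k l. EC E (wv \<tau> k) (wv \<tau> l) = 0"
  shows "E \<in> NS \<tau>"
proof -
  define Y where "Y = (\<chi> i j. Im (\<tau>$i$j))"
  have "invertible Y" using det unfolding Y_def invertible_det_nz .
  then obtain Yi where Yi: "Y ** Yi = mat 1" "Yi ** Y = mat 1" unfolding invertible_def by blast
  have YiY: "(\<Sum>l\<in>UNIV. Yi$k$l * Im (\<tau>$l$j)) = (if k = j then 1 else 0)" for k j
  proof -
    have "(Yi ** Y)$k$j = (if k = j then 1 else 0)" using Yi(2) by (simp add: mat_def)
    thus ?thesis by (simp add: matrix_matrix_mult_def Y_def)
  qed
  have YYi: "(\<Sum>l\<in>UNIV. Im (\<tau>$k$l) * Yi$l$j) = (if k = j then 1 else 0)" for k j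
  proof -
    have "(Y ** Yi)$k$j = (if k = j then 1 else 0)" using Yi(1) by (simp add: mat_def)
    thus ?thesis by (simp add: matrix_matrix_mult_def Y_def)
  qed
  have Mfun: "Mv \<tau> Yi v = (\<lambda>a. \<Sum>k\<in>UNIV. sv Yi v k * wv \<tau> k a)" for v
    by (intro ext) (simp add: Mv_def)
  have EC0: "EC E (Mv \<tau> Yi v) (Mv \<tau> Yi w) = 0" for v w
    unfolding Mfun EC_bilin cond by simp
  have latt: "BB \<tau> Yi E (lattice_vec \<tau> c) (lattice_vec \<tau> d) = of_int (E c d)" for c d
  proof -
    define p where "p = Mv \<tau> Yi (lattice_vec \<tau> c)"
    define q where "q = Mv \<tau> Yi (lattice_vec \<tau> d)"
    have pd: "(\<lambda>a. p a + cnj (p a)) = (\<lambda>a. if a = c then 1 else 0)"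
    proof (intro ext)
      fix a
      have "p a + cnj (p a) = complex_of_real (2 * Re (p a))" by (rule complex_add_cnj)
      also have "\<dots> = (if a = c then 1 else 0)" unfolding p_def psi[OF YiY YYi] by simp
      finally show "p a + cnj (p a) = (if a = c then 1 else 0)" .
    qed
    have qd: "(\<lambda>a. q a + cnj (q a)) = (\<lambda>a. if a = d then 1 else 0)"
    proof (intro ext)
      fix a
      have "q a + cnj (q a) = complex_of_real (2 * Re (q a))" by (rule complex_add_cnj)
      also have "\<dots> = (if a = d then 1 else 0)" unfolding q_def psi[OF YiY YYi] by simp
      finally show "q a + cnj (q a) = (if a = d then 1 else 0)" .
    qed
    define X where "X = EC E p (\<lambda>a. cnj (q a))"
    have pq: "EC E p q = 0" unfolding p_def q_def by (rule EC0)
    have "of_int (E c d) = EC E (\<lambda>a. p a + cnj (p a)) (\<lambda>a. q a + cnj (q a))"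
      unfolding pd qd EC_delta ..
    also have "\<dots> = EC E p q + X + (EC E (\<lambda>a. cnj (p a)) q + EC E (\<lambda>a. cnj (p a)) (\<lambda>a. cnj (q a)))"
      unfolding EC_add1 EC_add2 X_def ..
    also have "EC E (\<lambda>a. cnj (p a)) (\<lambda>a. cnj (q a)) = 0" unfolding EC_cnj pq by simp
    also have "EC E (\<lambda>a. cnj (p a)) q = cnj X"
    proof -
      have "EC E (\<lambda>a. cnj (p a)) q = EC E (\<lambda>a. cnj (p a)) (\<lambda>a. cnj (cnj (q a)))" by simp
      thus ?thesis unfolding EC_cnj X_def by simp
    qed
    finally have "of_int (E c d) = X + cnj X" using pq by simp
    also have "\<dots> = complex_of_real (2 * Re X)" by (rule complex_add_cnj)
    finally have "2 * Re X = of_int (E c d)"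
      by (metis Re_complex_of_real of_real_of_int_eq)
    thus ?thesis unfolding BB_def X_def p_def q_def .
  qed
  show ?thesis unfolding NS_def
    using alt1 alt2 BB_bilinear[of \<tau> Yi E] latt BB_i[of \<tau> Yi E] by blast
qed



lemma ker_subspace:
  fixes \<phi> :: "'i \<Rightarrow> rat^'n \<Rightarrow> rat"
  assumes add: "\<And>i x y. \<phi> i (x + y) = \<phi> i x + \<phi> i y"
    and sc: "\<And>i c x. \<phi> i (c *s x) = c * \<phi> i x"
  shows "vec.subspace {x. \<forall>i\<in>I. \<phi> i x = 0}"
proof -
  have z: "\<phi> i 0 = 0" for i using sc[of i 0 0] by simp
  show ?thesis unfolding vec.subspace_def using z add sc by auto
qed

lemma dim_hyper:
  fixes S :: "(rat^'n) set" and \<phi> :: "rat^'n \<Rightarrow> rat"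
  assumes S: "vec.subspace S" and add: "\<And>x y. \<phi> (x + y) = \<phi> x + \<phi> y"
    and sc: "\<And>c x. \<phi> (c *s x) = c * \<phi> x"
  shows "vec.dim S \<le> vec.dim (S \<inter> {x. \<phi> x = 0}) + 1"
proof (cases "\<forall>x\<in>S. \<phi> x = 0")
  case True
  hence "S \<inter> {x. \<phi> x = 0} = S" by auto
  thus ?thesis by simp
next
  case False
  then obtain b where b: "b \<in> S" "\<phi> b \<noteq> 0" by auto
  define K where "K = S \<inter> {x. \<phi> x = 0}"
  have "S \<subseteq> vec.span (insert b K)"
  proof
    fix x assume x: "x \<in> S"
    define t where "t = \<phi> x / \<phi> b"
    have "x - t *s b \<in> K"
    proof -
      have "x - t *s b \<in> S" using S x b by (simp add: vec.subspace_diff vec.subspace_scale)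
      moreover have "\<phi> (x - t *s b) = 0"
      proof -
        have "\<phi> x = \<phi> (x - t *s b) + \<phi> (t *s b)" using add[of "x - t *s b" "t *s b"] by simp
        thus ?thesis using sc[of t b] b(2) by (simp add: t_def)
      qed
      ultimately show ?thesis unfolding K_def by auto
    qed
    hence "x - t *s b \<in> vec.span (insert b K)" by (meson insertCI vec.span_base)
    moreover have "t *s b \<in> vec.span (insert b K)" by (simp add: vec.span_base vec.span_scale)
    ultimately have "(x - t *s b) + t *s b \<in> vec.span (insert b K)" by (rule vec.span_add)
    thus "x \<in> vec.span (insert b K)" by simp
  qed
  hence "vec.dim S \<le> vec.dim (insert b K)" by (rule vec.dim_mono)
  also have "\<dots> \<le> vec.dim K + 1" by (simp add: vec.dim_insert)
  finally show ?thesis unfolding K_def .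
qed

lemma dim_hypers:
  fixes S :: "(rat^'n) set" and \<phi> :: "'i \<Rightarrow> rat^'n \<Rightarrow> rat"
  assumes I: "finite I" and S: "vec.subspace S"
    and add: "\<And>i x y. \<phi> i (x + y) = \<phi> i x + \<phi> i y"
    and sc: "\<And>i c x. \<phi> i (c *s x) = c * \<phi> i x"
  shows "vec.dim S \<le> vec.dim (S \<inter> {x. \<forall>i\<in>I. \<phi> i x = 0}) + card I"
  using I
proof (induction I rule: finite_induct)
  case empty
  then show ?case by simp
next
  case (insert j I)
  let ?T = "S \<inter> {x. \<forall>i\<in>I. \<phi> i x = 0}"
  have sT: "vec.subspace ?T" using S ker_subspace[OF add sc] by (rule vec.subspace_inter)
  have "vec.dim ?T \<le> vec.dim (?T \<inter> {x. \<phi> j x = 0}) + 1"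
    by (rule dim_hyper[OF sT add sc])
  moreover have "?T \<inter> {x. \<phi> j x = 0} = S \<inter> {x. \<forall>i\<in>insert j I. \<phi> i x = 0}" by auto
  ultimately have "vec.dim ?T \<le> vec.dim (S \<inter> {x. \<forall>i\<in>insert j I. \<phi> i x = 0}) + 1" by simp
  moreover have "card (insert j I) = card I + 1" using insert.hyps by simp
  moreover have "vec.dim S \<le> vec.dim ?T + card I" by (rule insert.IH)
  ultimately show ?case by linarith
qed

definition T2 :: "nat \<Rightarrow> nat" where "T2 n = card {(i,j). (i::nat) < j \<and> j < n}"

lemma T2_formula: "2 * T2 n = n * (n - 1)"
proof (induction n)
  case 0
  then show ?case by (simp add: T2_def)
next
  case (Suc n)
  have eq: "{(i,j). (i::nat) < j \<and> j < Suc n} = {(i,j). i < j \<and> j < n} \<union> (\<lambda>i. (i,n)) ` {..<n}"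
    by auto
  have fin: "finite {(i,j). (i::nat) < j \<and> j < n}"
    by (rule finite_subset[of _ "{..<n} \<times> {..<n}"]) auto
  have "T2 (Suc n) = T2 n + n"
    unfolding T2_def eq
    by (subst card_Un_disjoint) (auto simp: fin card_image inj_on_def)
  then show ?case using Suc by (cases n) (auto simp: algebra_simps)
qed



lemma card_pairs:
  assumes f: "bij_betw f A {0..<n}"
  shows "card {(a,b). a \<in> A \<and> b \<in> A \<and> f a < f b} = T2 n"
proof -
  have "bij_betw (\<lambda>(a,b). (f a, f b)) {(a,b). a \<in> A \<and> b \<in> A \<and> f a < f b} {(i,j). (i::nat) < j \<and> j < n}"
    unfolding bij_betw_def
  proof
    show "inj_on (\<lambda>(a, b). (f a, f b)) {(a, b). a \<in> A \<and> b \<in> A \<and> f a < f b}"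
      using f unfolding bij_betw_def inj_on_def by auto
    have im: "f ` A = {0..<n}" using f by (simp add: bij_betw_def)
    show "(\<lambda>(a, b). (f a, f b)) ` {(a, b). a \<in> A \<and> b \<in> A \<and> f a < f b} = {(i, j). i < j \<and> j < n}"
    proof (intro equalityI subsetI)
      fix p assume "p \<in> (\<lambda>(a, b). (f a, f b)) ` {(a, b). a \<in> A \<and> b \<in> A \<and> f a < f b}"
      then show "p \<in> {(i, j). i < j \<and> j < n}" using im by fastforce
    next
      fix p assume p: "p \<in> {(i, j). i < j \<and> j < n}"
      then obtain i j where ij: "p = (i,j)" "i < j" "j < n" by auto
      obtain a where a: "a \<in> A" "f a = i" using im ij by (metis atLeastLessThan_iff imageE le0 order.strict_trans)
      obtain b where b: "b \<in> A" "f b = j" using im ij by (metis atLeastLessThan_iff imageE le0)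
      show "p \<in> (\<lambda>(a, b). (f a, f b)) ` {(a, b). a \<in> A \<and> b \<in> A \<and> f a < f b}"
        using a b ij by (intro image_eqI[of _ _ "(a,b)"]) auto
    qed
  qed
  hence "card {(a,b). a \<in> A \<and> b \<in> A \<and> f a < f b} = card {(i,j). (i::nat) < j \<and> j < n}"
    by (rule bij_betw_same_card)
  thus ?thesis unfolding T2_def .
qed

lemma sum_bij:
  fixes hg :: "'g::finite \<Rightarrow> nat"
  assumes hg: "bij_betw hg UNIV {0..<CARD('g)}"
  shows "bij_betw (case_sum hg (\<lambda>i. CARD('g) + hg i)) UNIV {0..<2 * CARD('g)}"
proof -
  let ?h = "case_sum hg (\<lambda>i. CARD('g) + hg i) :: 'g + 'g \<Rightarrow> nat"
  have inj: "inj hg" and im: "hg ` UNIV = {0..<CARD('g)}" using hg by (auto simp: bij_betw_def)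
  have hlt: "hg a < CARD('g)" for a using im by (metis atLeastLessThan_iff rangeI)
  show ?thesis unfolding bij_betw_def
  proof
    show "inj ?h"
    proof (rule injI)
      fix x y assume "?h x = ?h y"
      thus "x = y" using inj im
        by (cases x; cases y) (auto simp: inj_eq, (metis atLeastLessThan_iff image_eqI iso_tuple_UNIV_I not_add_less1)+)
    qed
    show "range ?h = {0..<2 * CARD('g)}"
    proof (intro equalityI subsetI)
      fix n assume "n \<in> range ?h"
      then obtain x where "n = ?h x" by auto
      thus "n \<in> {0..<2 * CARD('g)}" using hlt[of "projl x"] hlt[of "projr x"] by (cases x) auto
    next
      fix n assume n: "n \<in> {0..<2 * CARD('g)}"
      show "n \<in> range ?h"
      proof (cases "n < CARD('g)")
        case True
        then obtain i where "hg i = n" using im by (metis atLeastLessThan_iff imageE le0)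
        thus ?thesis by (metis old.sum.simps(5) rangeI)
      next
        case False
        then obtain i where "hg i = n - CARD('g)" using im n by (metis atLeastLessThan_iff imageE le0 less_diff_conv2 not_less mult_2 )
        hence "?h (Inr i) = n" using False by simp
        thus ?thesis by (metis rangeI)
      qed
    qed
  qed
qed



lemma rat_den_int:
  assumes "snd (quotient_of r) dvd D"
  shows "of_int D * r \<in> \<int>"
proof -
  obtain n d where q: "quotient_of r = (n, d)" by (cases "quotient_of r")
  have d: "d > 0" using quotient_of_denom_pos[OF q] .
  have r: "r = of_int n / of_int d" using quotient_of_div[OF q] .
  obtain m where m: "D = d * m" using assms q by (auto elim: dvdE)
  have "of_int D * r = of_int (m * n)" using d unfolding r m by (simp add: field_simps)
  thus ?thesis by simp
qed

lemma EC_antisym: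
  assumes "\<forall>a b. E a b = - E b a"
  shows "EC E p q = - EC E q p"
proof -
  have "EC E q p = (\<Sum>b\<in>UNIV. \<Sum>a\<in>UNIV. q a * of_int (E a b) * p b)"
    unfolding EC_def by (rule sum.swap)
  also have "\<dots> = (\<Sum>b\<in>UNIV. \<Sum>a\<in>UNIV. - (p b * of_int (E b a) * q a))"
  proof (intro sum.cong refl)
    fix b a
    have "E a b = - E b a" using assms by blast
    thus "q a * of_int (E a b) * p b = - (p b * of_int (E b a) * q a)" by (simp add: mult_ac)
  qed
  also have "\<dots> = - EC E p q" unfolding EC_def by (simp add: sum_negf)
  finally show ?thesis by simp
qed

lemma construct:
  fixes \<tau> :: "complex^'g^'g" and cf :: "complex \<Rightarrow> complex \<Rightarrow> rat"
  assumes Sb: "finite Sb" "card Sb \<le> 4"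
    and cf: "\<And>k l a b. wv \<tau> k a * wv \<tau> l b = (\<Sum>e\<in>Sb. of_rat (cf (wv \<tau> k a * wv \<tau> l b) e) * e)"
  shows "\<exists>S. finite S \<and> CARD('g) \<le> card S \<and> Z_indep S \<and>
    (\<forall>E\<in>S. (\<forall>a. E a a = 0) \<and> (\<forall>a b. E a b = - E b a) \<and> (\<forall>k l. EC E (wv \<tau> k) (wv \<tau> l) = 0))"
proof -
  define G where "G = CARD('g)"
  obtain hg where hg: "bij_betw hg (UNIV::'g set) {0..<G}"
    using ex_bij_betw_finite_nat[of "UNIV::'g set"] unfolding G_def by auto
  define h where "h = case_sum hg (\<lambda>i. G + hg i)"
  have hb: "bij_betw h UNIV {0..<2*G}" unfolding h_def G_def using sum_bij hg G_def by blast
  have hinj: "h a = h b \<Longrightarrow> a = b" for a b using hb unfolding bij_betw_def by (auto dest: injD)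
  define P where "P = {(a,b). h a < h b}"
  have cardP: "card P = T2 (2*G)"
    using card_pairs[OF hb] unfolding P_def by simp
  define P0 where "P0 = {(k,l). hg k < hg l}"
  have cardP0: "card P0 = T2 G"
    using card_pairs[OF hg] unfolding P0_def by simp
  define Q where "Q = P0 \<times> Sb"
  have finQ: "finite Q" unfolding Q_def using Sb by simp
  have cardQ: "card Q = T2 G * card Sb" unfolding Q_def card_cartesian_product cardP0 ..
  define Ex where "Ex x a b = (if h a < h b then x$(a,b) else if h b < h a then - x$(b,a) else 0)"
    for x :: "rat^(('g+'g)\<times>('g+'g))" and a b
  have Ex_add: "Ex (x + y) a b = Ex x a b + Ex y a b" for x y a b by (simp add: Ex_def)
  have Ex_sc: "Ex (c *s x) a b = c * Ex x a b" for c x a b by (simp add: Ex_def)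
  define \<phi> where "\<phi> i x = (\<Sum>a\<in>UNIV. \<Sum>b\<in>UNIV. cf (wv \<tau> (fst (fst i)) a * wv \<tau> (snd (fst i)) b) (snd i) * Ex x a b)"
    for i :: "('g\<times>'g)\<times>complex" and x
  have \<phi>_add: "\<phi> i (x + y) = \<phi> i x + \<phi> i y" for i x y
    by (simp add: \<phi>_def Ex_add distrib_left sum.distrib)
  have \<phi>_sc: "\<phi> i (c *s x) = c * \<phi> i x" for i c x
    by (simp add: \<phi>_def Ex_sc sum_distrib_left mult_ac)
  define U where "U = {x :: rat^(('g+'g)\<times>('g+'g)). \<forall>i. i \<notin> P \<longrightarrow> x$i = 0}"
  have sU: "vec.subspace U" unfolding U_def vec.subspace_def by auto
  have dimU: "vec.dim U = card P" unfolding U_def by (rule dim_substandard_cart)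
  define SS where "SS = U \<inter> {x. \<forall>i\<in>Q. \<phi> i x = 0}"
  have "vec.dim U \<le> vec.dim SS + card Q"
    unfolding SS_def by (rule dim_hypers[OF finQ sU \<phi>_add \<phi>_sc])
  moreover have "2 * T2 (2*G) = (2*G) * (2*G - 1)" by (rule T2_formula)
  moreover have "2 * T2 G = G * (G - 1)" by (rule T2_formula)
  moreover have "G \<ge> 1" unfolding G_def by simp
  hence "(2*G) * (2*G - 1) = 4 * (G * (G - 1)) + 2 * G" by (cases G) (simp_all add: algebra_simps)
  moreover have "T2 G * card Sb \<le> T2 G * 4" using Sb(2) by simp
  ultimately have dimSS: "G \<le> vec.dim SS" using dimU cardP cardQ by linarith
  obtain B where B: "B \<subseteq> SS" "vec.independent B" "SS \<subseteq> vec.span B" "card B = vec.dim SS"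
    by (rule vec.basis_exists)
  have finB: "finite B" using B(2) by (rule vec.finiteI_independent)
  define D where "D = (\<Prod>x\<in>B. \<Prod>i\<in>UNIV. snd (quotient_of (x$i)))"
  have Dpos: "D > 0" unfolding D_def by (intro prod_pos) (simp add: quotient_of_denom_pos')
  have xint: "of_int D * x$i \<in> \<int>" if "x \<in> B" for x i
  proof (rule rat_den_int)
    have "snd (quotient_of (x$i)) dvd (\<Prod>i\<in>UNIV. snd (quotient_of (x$i)))" by (rule dvd_prodI) auto
    also have "\<dots> dvd D" unfolding D_def using finB that by (rule dvd_prodI)
    finally show "snd (quotient_of (x$i)) dvd D" .
  qed
  have Exint: "of_int D * Ex x a b \<in> \<int>" if "x \<in> B" for x a b
    using xint[OF that] unfolding Ex_def by (auto simp: Ints_minus)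
  define Fint where "Fint x a b = \<lfloor>of_int D * Ex x a b\<rfloor>" for x a b
  have FI: "(of_int (Fint x a b) :: rat) = of_int D * Ex x a b" if "x \<in> B" for x a b
    using Exint[OF that, of a b] unfolding Fint_def by (auto elim: Ints_cases)
  have Ex_alt: "Ex x a a = 0" for x a by (simp add: Ex_def)
  have Ex_anti: "Ex x a b = - Ex x b a" for x a b
    using hinj[of a b] by (auto simp: Ex_def)
  have F_alt: "Fint x a a = 0" for x a by (simp add: Fint_def Ex_alt)
  have F_anti: "Fint x a b = - Fint x b a" if "x \<in> B" for x a b
  proof -
    have "(of_int (Fint x a b) :: rat) = of_int (- Fint x b a)"
      using FI[OF that, of a b] FI[OF that, of b a] Ex_anti[of x a b] by simp
    thus ?thesis by (simp only: of_int_eq_iff)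
  qed
  have F_cond0: "EC (Fint x) (wv \<tau> k) (wv \<tau> l) = 0" if x: "x \<in> B" and kl: "hg k < hg l" for x k l
  proof -
    have phi0: "\<phi> ((k,l),e) x = 0" if "e \<in> Sb" for e
      using B(1) x kl that unfolding SS_def Q_def P0_def by auto
    define F where "F a b e = of_int D * of_rat (cf (wv \<tau> k a * wv \<tau> l b) e * Ex x a b) * e" for a b e
    have e1: "wv \<tau> k a * of_int (Fint x a b) * wv \<tau> l b = (\<Sum>e\<in>Sb. F a b e)" for a b
    proof -
      have "(of_int (Fint x a b)::complex) = of_rat (of_int (Fint x a b))" by simp
      also have "\<dots> = of_int D * of_rat (Ex x a b)" unfolding FI[OF x] of_rat_mult by simp
      finally have "wv \<tau> k a * of_int (Fint x a b) * wv \<tau> l b = of_int D * of_rat (Ex x a b) * (wv \<tau> k a * wv \<tau> l b)"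
        by (simp add: mult_ac)
      also have "\<dots> = of_int D * of_rat (Ex x a b) * (\<Sum>e\<in>Sb. of_rat (cf (wv \<tau> k a * wv \<tau> l b) e) * e)"
        by (subst cf) (rule refl)
      also have "\<dots> = (\<Sum>e\<in>Sb. F a b e)"
        unfolding F_def sum_distrib_left by (intro sum.cong refl) (simp add: of_rat_mult mult_ac)
      finally show ?thesis .
    qed
    have "EC (Fint x) (wv \<tau> k) (wv \<tau> l) = (\<Sum>a\<in>UNIV. \<Sum>b\<in>UNIV. \<Sum>e\<in>Sb. F a b e)"
      unfolding EC_def e1 ..
    also have "\<dots> = (\<Sum>a\<in>UNIV. \<Sum>e\<in>Sb. \<Sum>b\<in>UNIV. F a b e)"
      by (intro sum.cong refl sum.swap)
    also have "\<dots> = (\<Sum>e\<in>Sb. \<Sum>a\<in>UNIV. \<Sum>b\<in>UNIV. F a b e)"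
      by (rule sum.swap)
    also have "\<dots> = (\<Sum>e\<in>Sb. of_int D * of_rat (\<phi> ((k,l),e) x) * e)"
    proof (intro sum.cong refl)
      fix e
      show "(\<Sum>a\<in>UNIV. \<Sum>b\<in>UNIV. F a b e) = of_int D * of_rat (\<phi> ((k,l),e) x) * e"
        unfolding F_def \<phi>_def of_rat_sum sum_distrib_left sum_distrib_right by simp
    qed
    also have "\<dots> = 0" using phi0 by simp
    finally show ?thesis .
  qed
  have F_cond: "EC (Fint x) (wv \<tau> k) (wv \<tau> l) = 0" if x: "x \<in> B" for x k l
  proof -
    have anti: "\<forall>a b. Fint x a b = - Fint x b a" using F_anti[OF x] by blast
    consider "hg k < hg l" | "k = l" | "hg l < hg k" using hg unfolding bij_betw_def
      by (metis injD linorder_neqE_nat)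
    thus ?thesis
    proof cases
      case 1 thus ?thesis using F_cond0[OF x] by blast
    next
      case 2
      have "EC (Fint x) (wv \<tau> k) (wv \<tau> k) = - EC (Fint x) (wv \<tau> k) (wv \<tau> k)"
        by (rule EC_antisym[OF anti])
      thus ?thesis using 2 by simp
    next
      case 3
      thus ?thesis using EC_antisym[OF anti, of "wv \<tau> k" "wv \<tau> l"] F_cond0[OF x 3] by simp
    qed
  qed
  have BU: "x \<in> U" if "x \<in> B" for x using B(1) that unfolding SS_def by auto
  have xP: "x$(a,b) = Ex x a b" if "(a,b) \<in> P" for x a b using that unfolding P_def Ex_def by simp
  have x0: "x$i = 0" if "x \<in> B" "i \<notin> P" for x i using BU[OF that(1)] that(2) unfolding U_def by (metis (mono_tags, lifting) mem_Collect_eq)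
  have injF: "inj_on Fint B"
  proof (rule inj_onI)
    fix x y assume x: "x \<in> B" and y: "y \<in> B" and eq: "Fint x = Fint y"
    have "Ex x a b = Ex y a b" for a b
    proof -
      have "(of_int (Fint x a b) :: rat) = of_int (Fint y a b)" using eq by simp
      hence "of_int D * Ex x a b = of_int D * Ex y a b" unfolding FI[OF x] FI[OF y] .
      thus ?thesis using Dpos by simp
    qed
    show "x = y" unfolding vec_eq_iff
    proof
      fix i :: "('g+'g)\<times>('g+'g)"
      obtain a b where i: "i = (a,b)" by (cases i)
      show "x$i = y$i"
      proof (cases "i \<in> P")
        case True thus ?thesis unfolding i using xP \<open>\<And>a b. Ex x a b = Ex y a b\<close> by (metis i)
      next
        case False thus ?thesis using x0[OF x] x0[OF y] by simp
      qed
    qed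
  qed
  have cardS: "card (Fint ` B) = card B" using injF by (rule card_image)
  have Zi: "Z_indep (Fint ` B)"
    unfolding Z_indep_def
  proof (intro conjI allI impI)
    show "finite (Fint ` B)" using finB by simp
    fix c :: "(('g+'g) \<Rightarrow> ('g+'g) \<Rightarrow> int) \<Rightarrow> int"
    assume hc: "\<forall>a b. (\<Sum>E\<in>Fint ` B. c E * E a b) = 0"
    define u where "u x = (of_int (c (Fint x)) * of_int D :: rat)" for x :: "rat^(('g+'g)\<times>('g+'g))"
    have hc2: "(\<Sum>x\<in>B. c (Fint x) * Fint x a b) = 0" for a b
      using hc sum.reindex[OF injF, of "\<lambda>E. c E * E a b"] by simp
    have "(\<Sum>x\<in>B. u x *s x) = 0"
      unfolding vec_eq_iff
    proof
      fix i :: "('g+'g)\<times>('g+'g)"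
      obtain a b where i: "i = (a,b)" by (cases i)
      have "(\<Sum>x\<in>B. u x *s x) $ i = (\<Sum>x\<in>B. u x * x$i)" by (simp add: sum_component)
      also have "\<dots> = 0"
      proof (cases "i \<in> P")
        case True
        have "(\<Sum>x\<in>B. u x * x$i) = (\<Sum>x\<in>B. of_int (c (Fint x) * Fint x a b))"
        proof (intro sum.cong refl)
          fix x assume x: "x \<in> B"
          show "u x * x$i = of_int (c (Fint x) * Fint x a b)"
            unfolding u_def i xP[OF True[unfolded i]] of_int_mult FI[OF x] by (simp add: mult_ac)
        qed
        also have "\<dots> = of_int (\<Sum>x\<in>B. c (Fint x) * Fint x a b)" by simp
        also have "\<dots> = 0" unfolding hc2 by simp
        finally show ?thesis .
      next
        case False
        thus ?thesis using x0 by simp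
      qed
      finally show "(\<Sum>x\<in>B. u x *s x) $ i = 0 $ i" by simp
    qed
    hence "\<forall>x\<in>B. u x = 0" using B(2) vec.dependent_finite[OF finB] by blast
    hence "\<forall>x\<in>B. c (Fint x) = 0" using Dpos unfolding u_def by simp
    thus "\<forall>E\<in>Fint ` B. c E = 0" by blast
  qed
  show ?thesis
  proof (intro exI[of _ "Fint ` B"] conjI)
    show "finite (Fint ` B)" using finB by simp
    show "CARD('g) \<le> card (Fint ` B)" using cardS B(4) dimSS G_def by simp
    show "Z_indep (Fint ` B)" by (rule Zi)
    show "\<forall>E\<in>Fint ` B. (\<forall>a. E a a = 0) \<and> (\<forall>a b. E a b = - E b a) \<and> (\<forall>k l. EC E (wv \<tau> k) (wv \<tau> l) = 0)"
      using F_alt F_anti F_cond by blast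
  qed
qed



theorem mainTheorem9:
  fixes \<tau> :: "complex^'g^'g"
  assumes "det (\<chi> i j. Im (\<tau>$i$j)) \<noteq> 0"
    and "picard_number \<tau> < enat CARD('g)"
  shows "field_degree (gen_field {\<tau>$i$j | i j. True}) \<ge> 5"
proof (rule ccontr)
  define K where "K = gen_field {\<tau>$i$j | i j. True}"
  assume "\<not> field_degree (gen_field {\<tau>$i$j | i j. True}) \<ge> 5"
  hence nd: "\<not> field_degree K \<ge> 5" unfolding K_def .
  obtain Sb where Sb: "finite Sb" "card Sb \<le> 4" "Sb \<subseteq> K"
    and span: "\<forall>z\<in>K. \<exists>c. z = (\<Sum>x\<in>Sb. of_rat (c x) * x)"
    using degree_span[OF nd] by blast
  have sf: "is_subfield K" unfolding K_def by (rule subfield_gen)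
  have ent: "\<tau>$i$j \<in> K" for i j
  proof -
    have "\<tau>$i$j \<in> {\<tau>$i$j | i j. True}" by blast
    thus ?thesis unfolding K_def by (rule subsetD[OF gen_field_sub])
  qed
  have sf': "0 \<in> K \<and> 1 \<in> K \<and> (\<forall>x\<in>K. \<forall>y\<in>K. x + y \<in> K \<and> x - y \<in> K \<and> x * y \<in> K)"
    using sf unfolding is_subfield_def by (elim conjE) (intro conjI)
  have K0: "0 \<in> K" using sf' by simp
  have K1: "1 \<in> K" using sf' by simp
  have Kd: "x - y \<in> K" if "x \<in> K" "y \<in> K" for x y using sf' that by simp
  have Km: "x * y \<in> K" if "x \<in> K" "y \<in> K" for x y using sf' that by simp
  have wvK: "wv \<tau> k a \<in> K" for k a
  proof (cases a)
    case (Inl k')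
    thus ?thesis using K0 K1 unfolding wv_def by simp
  next
    case (Inr k')
    have "0 - \<tau>$k'$k \<in> K" using Kd[OF K0 ent] .
    thus ?thesis using Inr unfolding wv_def by simp
  qed
  have prodK: "wv \<tau> k a * wv \<tau> l b \<in> K" for k l a b
    using Km[OF wvK wvK] .
  define cf where "cf z = (SOME c. z = (\<Sum>x\<in>Sb. of_rat (c x) * x))" for z
  have cfp: "z = (\<Sum>x\<in>Sb. of_rat (cf z x) * x)" if "z \<in> K" for z
  proof -
    have "\<exists>c. z = (\<Sum>x\<in>Sb. of_rat (c x) * x)" using span that by blast
    thus ?thesis unfolding cf_def by (rule someI_ex)
  qed
  obtain S where S: "finite S" "CARD('g) \<le> card S" "Z_indep S"
    "\<forall>E\<in>S. (\<forall>a. E a a = 0) \<and> (\<forall>a b. E a b = - E b a) \<and> (\<forall>k l. EC E (wv \<tau> k) (wv \<tau> l) = 0)"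
    using construct[OF Sb(1,2) cfp[OF prodK]] by blast
  have "S \<subseteq> NS \<tau>"
  proof
    fix E assume "E \<in> S"
    hence E: "(\<forall>a. E a a = 0) \<and> (\<forall>a b. E a b = - E b a) \<and> (\<forall>k l. EC E (wv \<tau> k) (wv \<tau> l) = 0)"
      using S(4) by blast
    show "E \<in> NS \<tau>" using E by (intro NS_intro[OF assms(1)]) (elim conjE, assumption | blast)+
  qed
  have "enat (card S) \<le> picard_number \<tau>"
    unfolding picard_number_def
  proof (rule Sup_upper)
    show "enat (card S) \<in> {enat (card S) |S. S \<subseteq> NS \<tau> \<and> Z_indep S}"
      using \<open>S \<subseteq> NS \<tau>\<close> S(3) by blast
  qed
  moreover have "enat CARD('g) \<le> enat (card S)" using S(2) by simp
  ultimately have "enat CARD('g) \<le> picard_number \<tau>" by (rule order.trans[rotated])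
  thus False using assms(2) by simp
qed


end
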